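(* The set $\mathcal{SM}$ of strong minuscule elements of $W$ decomposes as the disjoint union \[\mathcal{SM}=\bigsqcup_{i\in K}\mathcal{SM}_i,\qquad \mathcal{SM}_i:=\{w\in\mathcal{SM}\mid \Lambda_w=\Lambda_i\}.\] In particular, for every strong minuscule $w$, $\Lambda_w$ is a fundamental weight $\Lambda_i$ with $i\in K$.
   Context: Let $\mathfrak g$ be a finite-dimensional simple Lie algebra over $\mathbb C$ of type $\mathrm A_n$, $\mathrm B_n$, $\mathrm C_n$ or $\mathrm D_n$, with index set $I=\{1,\dots,n\}$, simple roots $\alpha_i$, simple coroots $\alpha_i^\vee$, fundamental weights $\Lambda_i$, integral weights $P=\bigoplus_i\mathbb Z\Lambda_i$, dominant integral weights $P^+=\sum_i\mathbb Z_{\ge0}\Lambda_i$, and Weyl group $W$ generated by simple reflections $s_i$. The Dynkin diagrams are labeled as follows: type $\mathrm A_n$: chain $1-2-\cdots-n$; type $\mathrm B_n$: chain $1-2-\cdots-n$ with a double bond between $1$ and $2$, $\alpha_1$ short and $\alpha_2,\dots,\alpha_n$ long; type $\mathrm C_n$: chain $1-2-\cdots-n$ with a double bond between $1$ and $2$, $\alpha_1$ long and $\alpha_2,\dots,\alpha_n$ short; type $\mathrm D_n$: chain $n-(n-1)-\cdots-3$ with node $3$ joined to both nodes $1$ and $2$. Set $K=I$ in types $\mathrm A_n,\mathrm D_n$, $K=\{1\}$ in type $\mathrm B_n$, $K=I\setminus\{1\}$ in type $\mathrm C_n$. For $\Lambda\in P$, $w\in W$ is $\Lambda$-minuscule if there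 is a reduced expression $w=s_{i_1}\cdots s_{i_r}$ with $\langle s_{i_{p+1}}\cdots s_{i_r}(\Lambda),\alpha_{i_p}^\vee\rangle=1$ for all $1\le p\le r$; $w$ is dominant minuscule if it is $\Lambda$-minuscule for some $\Lambda\in P^+$. A dominant minuscule $w$ is strong minuscule if there is a unique $\Lambda\in P^+$, denoted $\Lambda_w$, such that $w$ is $\Lambda$-minuscule; $\mathcal{SM}$ denotes the set of strong minuscule elements. *)

theory Defs
  imports Main
begin

datatype cartan_type = TA | TB | TC | TD

definition valid_type :: "cartan_type \<Rightarrow> nat \<Rightarrow> bool" where
  "valid_type t n = (case t of TA \<Rightarrow> n \<ge> 1 | TB \<Rightarrow> n \<ge> 2 | TC \<Rightarrow> n \<ge> 2 | TD \<Rightarrow> n \<ge> 4)"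

definition idx :: "nat \<Rightarrow> nat set" where "idx n = {1..n}"

definition adjacent :: "cartan_type \<Rightarrow> nat \<Rightarrow> nat \<Rightarrow> bool" where
  "adjacent t i j = (case t of
      TD \<Rightarrow> ({i,j} = {1,3} \<or> {i,j} = {2,3} \<or> (3 \<le> min i j \<and> (i = j + 1 \<or> j = i + 1)))
    | _ \<Rightarrow> (i = j + 1 \<or> j = i + 1))"

text \<open>cartan t n j i = <alpha_i, alpha_j^vee>.
  Type B: alpha_1 short, alpha_2 long, so <alpha_1,alpha_2^vee> = -1, <alpha_2,alpha_1^vee> = -2.
  Type C: alpha_1 long, alpha_2 short, so <alpha_1,alpha_2^vee> = -2, <alpha_2,alpha_1^vee> = -1.\<close>
definition cartan :: "cartan_type \<Rightarrow> nat \<Rightarrow> nat \<Rightarrow> nat \<Rightarrow> int" where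
  "cartan t n j i =
     (if i \<notin> idx n \<or> j \<notin> idx n then 0
      else if i = j then 2
      else if \<not> adjacent t i j then 0
      else if t = TB \<and> j = 1 \<and> i = 2 then -2
      else if t = TC \<and> j = 2 \<and> i = 1 then -2
      else -1)"

text \<open>Integral weights in the basis of fundamental weights: lambda j = <lambda, alpha_j^vee>.\<close>
type_synonym weight = "nat \<Rightarrow> int"

definition int_weights :: "nat \<Rightarrow> weight set" where
  "int_weights n = {l. \<forall>j. j \<notin> idx n \<longrightarrow> l j = 0}"

definition dominant_weights :: "nat \<Rightarrow> weight set" where
  "dominant_weights n = {l \<in> int_weights n. \<forall>j. l j \<ge> 0}"

definition fund_weight :: "nat \<Rightarrow> weight" where
  "fund_weight i = (\<lambda>j. if j = i then 1 else 0)"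

text \<open>Simple reflection s_i(lambda) = lambda - <lambda,alpha_i^vee> alpha_i.\<close>
definition srefl :: "cartan_type \<Rightarrow> nat \<Rightarrow> nat \<Rightarrow> weight \<Rightarrow> weight" where
  "srefl t n i l = (\<lambda>j. l j - l i * cartan t n j i)"

definition word_act :: "cartan_type \<Rightarrow> nat \<Rightarrow> nat list \<Rightarrow> weight \<Rightarrow> weight" where
  "word_act t n ws = foldr (srefl t n) ws"

text \<open>The Weyl group, realised faithfully via its action on the weights.\<close>
definition weyl :: "cartan_type \<Rightarrow> nat \<Rightarrow> (weight \<Rightarrow> weight) set" where
  "weyl t n = {word_act t n ws | ws. set ws \<subseteq> idx n}"

definition reduced_expr :: "cartan_type \<Rightarrow> nat \<Rightarrow> nat list \<Rightarrow> (weight \<Rightarrow> weight) \<Rightarrow> bool" where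
  "reduced_expr t n ws w \<longleftrightarrow> set ws \<subseteq> idx n \<and> word_act t n ws = w \<and>
     (\<forall>vs. set vs \<subseteq> idx n \<and> word_act t n vs = w \<longrightarrow> length ws \<le> length vs)"

definition minuscule :: "cartan_type \<Rightarrow> nat \<Rightarrow> weight \<Rightarrow> (weight \<Rightarrow> weight) \<Rightarrow> bool" where
  "minuscule t n \<Lambda> w \<longleftrightarrow> (\<exists>ws. reduced_expr t n ws w \<and>
     (\<forall>p \<in> {1..length ws}. word_act t n (drop p ws) \<Lambda> (ws ! (p - 1)) = 1))"

definition dominant_minuscule :: "cartan_type \<Rightarrow> nat \<Rightarrow> (weight \<Rightarrow> weight) \<Rightarrow> bool" where
  "dominant_minuscule t n w \<longleftrightarrow> w \<in> weyl t n \<and> (\<exists>\<Lambda> \<in> dominant_weights n. minuscule t n \<Lambda> w)"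

definition strong_minuscule :: "cartan_type \<Rightarrow> nat \<Rightarrow> (weight \<Rightarrow> weight) \<Rightarrow> bool" where
  "strong_minuscule t n w \<longleftrightarrow> dominant_minuscule t n w \<and>
     (\<exists>!\<Lambda>. \<Lambda> \<in> dominant_weights n \<and> minuscule t n \<Lambda> w)"

definition Lambda_of :: "cartan_type \<Rightarrow> nat \<Rightarrow> (weight \<Rightarrow> weight) \<Rightarrow> weight" where
  "Lambda_of t n w = (THE \<Lambda>. \<Lambda> \<in> dominant_weights n \<and> minuscule t n \<Lambda> w)"

definition SM :: "cartan_type \<Rightarrow> nat \<Rightarrow> (weight \<Rightarrow> weight) set" where
  "SM t n = {w. strong_minuscule t n w}"

definition SM_i :: "cartan_type \<Rightarrow> nat \<Rightarrow> nat \<Rightarrow> (weight \<Rightarrow> weight) set" where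
  "SM_i t n i = {w \<in> SM t n. Lambda_of t n w = fund_weight i}"

definition Kset :: "cartan_type \<Rightarrow> nat \<Rightarrow> nat set" where
  "Kset t n = (case t of TA \<Rightarrow> idx n | TD \<Rightarrow> idx n | TB \<Rightarrow> {1} | TC \<Rightarrow> idx n - {1})"

end

theory Submission
  imports Defs
begin

lemma adjacent_sym: "adjacent t i j = adjacent t j i"
  unfolding adjacent_def by (cases t) (auto simp: insert_commute min.commute)

lemma cartan_offdiag_le: "i \<noteq> j \<Longrightarrow> cartan t n i j \<le> 0"
  unfolding cartan_def by auto

lemma cartan_adj: "i \<in> idx n \<Longrightarrow> j \<in> idx n \<Longrightarrow> i \<noteq> j \<Longrightarrow> adjacent t i j \<Longrightarrow> cartan t n i j \<le> -1"
  unfolding cartan_def by (auto simp: adjacent_sym)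

fun fr :: "cartan_type \<Rightarrow> nat \<Rightarrow> weight \<Rightarrow> nat list \<Rightarrow> bool" where
  "fr t n L [] = True"
| "fr t n L (i # vs) = (L i = 1 \<and> fr t n (srefl t n i L) vs)"

lemma word_act_snoc: "word_act t n (xs @ [i]) L = word_act t n xs (srefl t n i L)"
  by (simp add: word_act_def)

lemma cond_to_fr:
  "(\<forall>p\<in>{1..length ws}. word_act t n (drop p ws) L (ws!(p-1)) = 1) \<Longrightarrow> fr t n L (rev ws)"
proof (induction ws arbitrary: L rule: rev_induct)
  case Nil then show ?case by simp
next
  case (snoc i xs)
  have h1: "L i = 1" using snoc.prems[rule_format, of "Suc (length xs)"]
    by (simp add: word_act_def nth_append)
  have h2: "\<forall>p\<in>{1..length xs}. word_act t n (drop p xs) (srefl t n i L) (xs!(p-1)) = 1"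
  proof
    fix p assume p: "p \<in> {1..length xs}"
    then have "word_act t n (drop p (xs@[i])) L ((xs@[i])!(p-1)) = 1" using snoc.prems[rule_format, of p] by simp
    moreover have "drop p (xs@[i]) = drop p xs @ [i]" using p by simp
    moreover have "(xs@[i])!(p-1) = xs!(p-1)" using p by (auto simp: nth_append)
    ultimately show "word_act t n (drop p xs) (srefl t n i L) (xs!(p-1)) = 1"
      by (simp add: word_act_snoc)
  qed
  then show ?case using snoc.IH h1 by simp
qed

lemma fr_sum: "fr t n L vs \<Longrightarrow> k < length vs \<Longrightarrow> L (vs!k) - (\<Sum>q<k. cartan t n (vs!k) (vs!q)) = 1"
proof (induction vs arbitrary: L k)
  case Nil then show ?case by simp
next
  case (Cons i us)
  show ?case
  proof (cases k)
    case 0 then show ?thesis using Cons.prems by simp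
  next
    case (Suc k')
    have a: "fr t n (srefl t n i L) us" "k' < length us" using Cons.prems Suc by auto
    from Cons.IH[OF a] have "srefl t n i L (us!k') - (\<Sum>q<k'. cartan t n (us!k') (us!q)) = 1" .
    moreover have "L i = 1" using Cons.prems by simp
    ultimately show ?thesis using Suc by (simp del: sum.lessThan_Suc add: srefl_def sum.lessThan_Suc_shift)
  qed
qed

lemma word_act_add_fund:
  "j \<notin> set xs \<Longrightarrow> word_act t n xs (\<lambda>k. L k + fund_weight j k) = (\<lambda>k. word_act t n xs L k + fund_weight j k)"
proof (induction xs)
  case Nil then show ?case by (simp add: word_act_def)
next
  case (Cons x xs)
  then have "x \<noteq> j" by auto
  then show ?case using Cons by (auto simp: word_act_def srefl_def fund_weight_def algebra_simps)
qed

lemma path_incr: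
  fixes ft p :: "nat \<Rightarrow> nat" and L :: "nat \<Rightarrow> int" and A :: "nat \<Rightarrow> nat \<Rightarrow> bool"
  assumes inN: "\<And>k. k \<le> m \<Longrightarrow> p k \<in> N"
  and inj: "inj_on p {..m}"
  and adj: "\<And>k. k < m \<Longrightarrow> A (p k) (p (Suc k))"
  and sym: "\<And>i j. A i j \<Longrightarrow> A j i"
  and ftinj: "\<And>i j. i \<in> N \<Longrightarrow> j \<in> N \<Longrightarrow> ft i = ft j \<Longrightarrow> i = j"
  and P1: "\<And>i j. i \<in> N \<Longrightarrow> j \<in> N \<Longrightarrow> L i = 1 \<Longrightarrow> A i j \<Longrightarrow> i \<noteq> j \<Longrightarrow> ft i < ft j"
  and P2: "\<And>i j j'. i \<in> N \<Longrightarrow> j \<in> N \<Longrightarrow> j' \<in> N \<Longrightarrow> L i = 0 \<Longrightarrow> A i j \<Longrightarrow> A i j'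
            \<Longrightarrow> j \<noteq> j' \<Longrightarrow> j \<noteq> i \<Longrightarrow> j' \<noteq> i \<Longrightarrow> ft j < ft i \<Longrightarrow> ft j' < ft i \<Longrightarrow> False"
  and L01: "\<And>i. i \<in> N \<Longrightarrow> L i = 0 \<or> L i = 1"
  and start: "L (p 0) = 1"
  shows "k < m \<Longrightarrow> ft (p k) < ft (p (Suc k))"
proof (induction k)
  case 0
  have "p 0 \<noteq> p 1" using inj_onD[OF inj, of 0 1] 0 by auto
  then show ?case using P1[of "p 0" "p 1"] start adj[of 0] inN[of 0] inN[of 1] 0 by auto
next
  case (Suc k)
  then have IH: "ft (p k) < ft (p (Suc k))" by simp
  have ne1: "p k \<noteq> p (Suc k)" using inj_onD[OF inj, of k "Suc k"] Suc.prems by auto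
  have ne2: "p (Suc (Suc k)) \<noteq> p (Suc k)" using inj_onD[OF inj, of "Suc (Suc k)" "Suc k"] Suc.prems by auto
  have ne3: "p k \<noteq> p (Suc (Suc k))" using inj_onD[OF inj, of k "Suc (Suc k)"] Suc.prems by auto
  have n0: "p k \<in> N" "p (Suc k) \<in> N" "p (Suc (Suc k)) \<in> N" using inN Suc.prems by auto
  have a1: "A (p (Suc k)) (p k)" using adj[of k] sym Suc.prems by auto
  have a2: "A (p (Suc k)) (p (Suc (Suc k)))" using adj[of "Suc k"] Suc.prems by auto
  show ?case
  proof (cases "L (p (Suc k)) = 1")
    case True
    then have "ft (p (Suc k)) < ft (p k)" using P1[OF n0(2) n0(1) True a1] ne1 by auto
    then show ?thesis using IH by simp
  next
    case False
    then have L0: "L (p (Suc k)) = 0" using L01[OF n0(2)] by auto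
    show ?thesis
    proof (rule ccontr)
      assume "\<not> ?thesis"
      moreover have "ft (p (Suc (Suc k))) \<noteq> ft (p (Suc k))" using ftinj[OF n0(3) n0(2)] ne2 by auto
      ultimately have "ft (p (Suc (Suc k))) < ft (p (Suc k))" by simp
      then show False using P2[OF n0(2) n0(1) n0(3) L0 a1 a2 ne3] ne1 ne2 IH by auto
    qed
  qed
qed

lemma key:
  assumes vt: "valid_type t n"
  and fire: "\<And>k. k < length vs \<Longrightarrow> L (vs!k) - (\<Sum>q<k. cartan t n (vs!k) (vs!q)) = 1"
  and cover: "idx n \<subseteq> set vs"
  and nonneg: "\<And>j. L j \<ge> 0"
  and intw: "L \<in> int_weights n"
  shows "\<exists>i\<in>Kset t n. L = fund_weight i"
proof -
  define ft where "ft i = (LEAST k. k < length vs \<and> vs!k = i)" for i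
  have ft: "ft i < length vs \<and> vs!(ft i) = i" if "i \<in> idx n" for i
  proof -
    have "i \<in> set vs" using that cover by auto
    then obtain k where "k < length vs" "vs!k = i" by (metis in_set_conv_nth)
    then show ?thesis unfolding ft_def by (metis (mono_tags, lifting) LeastI)
  qed
  have ftmin: "vs!q \<noteq> i" if "i \<in> idx n" "q < ft i" for i q
  proof
    assume e: "vs!q = i"
    have "q < length vs" using ft[OF that(1)] that(2) by simp
    then have "ft i \<le> q" unfolding ft_def using e by (auto intro: Least_le)
    then show False using that(2) by simp
  qed
  have ftinj: "i = j" if "i\<in>idx n" "j \<in> idx n" "ft i = ft j" for i j using ft that by metis
  have nn: "- cartan t n i (vs!q) \<ge> 0" if "i\<in>idx n" "q < ft i" for i q
    using cartan_offdiag_le[of i "vs!q" t n] ftmin[OF that] by auto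
  have tot: "(\<Sum>q<ft i. - cartan t n i (vs!q)) = 1 - L i" if "i\<in>idx n" for i
    using fire[of "ft i"] ft[OF that] by (simp add: sum_negf)
  have keyQ: "(\<Sum>q\<in>Q. - cartan t n i (vs!q)) \<le> 1 - L i" if "i\<in>idx n" "Q \<subseteq> {..<ft i}" for i Q
  proof -
    have "(\<Sum>q\<in>Q. - cartan t n i (vs!q)) \<le> (\<Sum>q<ft i. - cartan t n i (vs!q))"
      by (rule sum_mono2) (use that nn in auto)
    then show ?thesis using tot[OF that(1)] by simp
  qed
  have L01: "L i = 0 \<or> L i = 1" if "i \<in> idx n" for i
    using keyQ[OF that, of "{}"] nonneg[of i] by auto
  have P1: "ft i < ft j" if "i\<in>idx n" "j\<in>idx n" "L i = 1" "adjacent t i j" "i \<noteq> j" for i j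
  proof (rule ccontr)
    assume "\<not> ft i < ft j"
    moreover have "ft i \<noteq> ft j" using ftinj that by blast
    ultimately have "ft j < ft i" by simp
    then have "- cartan t n i (vs!(ft j)) \<le> 1 - L i" using keyQ[OF that(1), of "{ft j}"] by simp
    then show False using cartan_adj[OF that(1,2,5,4)] ft[OF that(2)] that(3) by simp
  qed
  have P2: False if "i\<in>idx n" "j\<in>idx n" "j'\<in>idx n" "L i = 0" "adjacent t i j" "adjacent t i j'"
     "j \<noteq> j'" "j \<noteq> i" "j' \<noteq> i" "ft j < ft i" "ft j' < ft i" for i j j'
  proof -
    have "ft j \<noteq> ft j'" using ftinj that by blast
    then have "(\<Sum>q\<in>{ft j, ft j'}. - cartan t n i (vs!q)) = - cartan t n i j - cartan t n i j'"
      using ft that by simp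
    moreover have "- cartan t n i j - cartan t n i j' \<ge> 2"
      using cartan_adj[of i n j t] cartan_adj[of i n j' t] that by simp
    moreover have "(\<Sum>q\<in>{ft j, ft j'}. - cartan t n i (vs!q)) \<le> 1"
      using keyQ[OF that(1), of "{ft j, ft j'}"] that by simp
    ultimately show False by simp
  qed
  have P3: False if "i\<in>idx n" "j\<in>idx n" "L i = 0" "cartan t n i j = -2" "ft j < ft i" for i j
    using keyQ[OF that(1), of "{ft j}"] that ft[OF that(2)] by simp
  have incr: "ft (p k) < ft (p (Suc k))"
    if "inj_on p {..m}" "\<And>k. k \<le> m \<Longrightarrow> p k \<in> idx n"
       "\<And>k. k < m \<Longrightarrow> adjacent t (p k) (p (Suc k))" "L (p 0) = 1" "k < m" for p m k
    apply (rule path_incr[where N="idx n" and A="adjacent t" and L=L and m=m and ft=ft and p=p])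
    using that apply simp
    using that apply simp
    using that apply simp
    apply (simp add: adjacent_sym)
    using ftinj apply blast
    using P1 apply blast
    using P2 apply blast
    using L01 apply blast
    using that apply simp
    using that apply simp
    done
  have path: False
    if pa: "inj_on p {..m}" "\<And>k. k \<le> m \<Longrightarrow> p k \<in> idx n"
       "\<And>k. k < m \<Longrightarrow> adjacent t (p k) (p (Suc k))" "L (p 0) = 1" "L (p m) = 1" "0 < m" for p m
  proof -
    obtain m' where m': "m = Suc m'" using pa(6) by (cases m) auto
    have "ft (p m') < ft (p m)" using incr[OF that(1-4), of m'] m' by simp
    moreover have "p m \<noteq> p m'" using inj_onD[OF that(1), of m m'] m' by auto
    moreover have "adjacent t (p m) (p m')" using that(3)[of m'] m' adjacent_sym by auto
    ultimately show False using P1[of "p m" "p m'"] that(2)[of m] that(2)[of m'] that(5) m' by auto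
  qed
  have n1: "n \<ge> 1" using vt by (cases t) (auto simp: valid_type_def)
  have idx_iff: "k \<in> idx n \<longleftrightarrow> 1 \<le> k \<and> k \<le> n" for k by (simp add: idx_def)
  have two: False if "i \<in> idx n" "j \<in> idx n" "i < j" "L i = 1" "L j = 1" for i j
  proof (cases "t = TD \<and> i < 3")
    case False
    define p where "p k = i + k" for k
    show False
    proof (rule path[of p "j - i"])
      show "inj_on p {..j - i}" by (auto simp: p_def inj_on_def)
      show "p k \<in> idx n" if "k \<le> j - i" for k using that \<open>i \<in> idx n\<close> \<open>j \<in> idx n\<close> \<open>i < j\<close>
        by (auto simp: p_def idx_iff)
      show "adjacent t (p k) (p (Suc k))" if "k < j - i" for k
        using False by (cases t) (auto simp: adjacent_def p_def)
      show "L (p 0) = 1" "L (p (j - i)) = 1" using that by (auto simp: p_def)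
      show "0 < j - i" using that by simp
    qed
  next
    case True
    then have tD: "t = TD" and i3: "i < 3" by auto
    have n4: "n \<ge> 4" using vt tD by (simp add: valid_type_def)
    show False
    proof (cases "j \<ge> 3")
      case True
      define p where "p k = (if k = 0 then i else k + 2)" for k
      show False
      proof (rule path[of p "j - 2"])
        show "inj_on p {..j - 2}" using i3 by (auto simp: p_def inj_on_def)
        show "p k \<in> idx n" if "k \<le> j - 2" for k using that \<open>i \<in> idx n\<close> \<open>j \<in> idx n\<close> True
          by (auto simp: p_def idx_iff)
        show "adjacent t (p k) (p (Suc k))" if "k < j - 2" for k
          using tD i3 \<open>i \<in> idx n\<close> by (auto simp: adjacent_def p_def idx_iff)
        have "Suc (Suc (j - 2)) = j" using True by simp
        then show "L (p 0) = 1" "L (p (j - 2)) = 1" using that True by (auto simp: p_def)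
        show "0 < j - 2" using True by simp
      qed
    next
      case False
      then have ij: "i = 1" "j = 2" using that i3 by (auto simp: idx_iff)
      define p where "p k = (if k = 0 then 1 else if k = 1 then 3 else (2::nat))" for k :: nat
      show False
      proof (rule path[of p 2])
        show "inj_on p {..2}" by (auto simp: p_def inj_on_def)
        show "p k \<in> idx n" if "k \<le> 2" for k using n4 by (auto simp: p_def idx_iff)
        show "adjacent t (p k) (p (Suc k))" if "k < 2" for k
          using tD that by (auto simp: adjacent_def p_def less_Suc_eq insert_commute)
        show "L (p 0) = 1" "L (p 2) = 1" using that ij by (auto simp: p_def)
      qed simp
    qed
  qed
  have "1 \<in> idx n" using n1 by (simp add: idx_def)
  then have ne: "vs \<noteq> []" using cover by auto
  define i where "i = vs!0"
  have Li: "L i = 1" using fire[of 0] ne by (simp add: i_def)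
  have ii: "i \<in> idx n" using Li intw by (auto simp: int_weights_def)
  have oth: "L j = 0" if "j \<noteq> i" for j
  proof (cases "j \<in> idx n")
    case True
    show ?thesis
    proof (rule ccontr)
      assume "L j \<noteq> 0"
      then have "L j = 1" using L01[OF True] by auto
      then show False using two[of i j] two[of j i] ii True Li that by (cases "i < j") auto
    qed
  next
    case False then show ?thesis using intw by (auto simp: int_weights_def)
  qed
  have Lf: "L = fund_weight i" using oth Li by (auto simp: fund_weight_def)
  have "i \<in> Kset t n"
  proof (cases t)
    case TA then show ?thesis using ii by (simp add: Kset_def)
  next
    case TD then show ?thesis using ii by (simp add: Kset_def)
  next
    case TB
    have n2: "n \<ge> 2" using vt TB by (simp add: valid_type_def)
    show ?thesis
    proof (rule ccontr)
      assume "i \<notin> Kset t n"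
      then have i2: "i \<ge> 2" using TB ii by (auto simp: Kset_def idx_iff)
      define p where "p k = i - k" for k
      have "ft (p (i - 2)) < ft (p (Suc (i - 2)))"
      proof (rule incr[of p "i - 1"])
        show "inj_on p {..i - 1}" by (auto simp: p_def inj_on_def)
        show "p k \<in> idx n" if "k \<le> i - 1" for k using that ii by (auto simp: p_def idx_iff)
        show "adjacent t (p k) (p (Suc k))" if "k < i - 1" for k
          using TB that by (auto simp: adjacent_def p_def)
        show "L (p 0) = 1" using Li by (simp add: p_def)
        show "i - 2 < i - 1" using i2 by simp
      qed
      moreover have "p (i - 2) = 2" "p (Suc (i - 2)) = 1" using i2 by (auto simp: p_def)
      ultimately have "ft 2 < ft 1" by simp
      moreover have "cartan t n 1 2 = -2" using TB n2 by (simp add: cartan_def idx_def adjacent_def)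
      moreover have "L 1 = 0" using oth i2 by simp
      ultimately show False using P3[of 1 2] n2 by (simp add: idx_def)
    qed
  next
    case TC
    have n2: "n \<ge> 2" using vt TC by (simp add: valid_type_def)
    show ?thesis
    proof (rule ccontr)
      assume "i \<notin> Kset t n"
      then have i1: "i = 1" using TC ii by (auto simp: Kset_def)
      have "2 \<in> idx n" using n2 by (simp add: idx_def)
      then have "ft 1 < ft 2" using P1[of 1 2] ii i1 Li TC by (simp add: adjacent_def)
      moreover have "cartan t n 2 1 = -2" using TC n2 by (simp add: cartan_def idx_def adjacent_def)
      moreover have "L 2 = 0" using oth i1 by simp
      ultimately show False using P3[of 2 1] n2 by (simp add: idx_def)
    qed
  qed
  then show ?thesis using Lf by blast
qed

theorem corollary6p4:
  assumes "valid_type t n"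
  shows "SM t n = (\<Union>i \<in> Kset t n. SM_i t n i)
       \<and> (\<forall>i \<in> Kset t n. \<forall>j \<in> Kset t n. i \<noteq> j \<longrightarrow> SM_i t n i \<inter> SM_i t n j = {})
       \<and> (\<forall>w \<in> SM t n. \<exists>i \<in> Kset t n. Lambda_of t n w = fund_weight i)"
proof -
  have main: "\<exists>i\<in>Kset t n. Lambda_of t n w = fund_weight i" if "w \<in> SM t n" for w
  proof -
    from that have sm: "strong_minuscule t n w" by (simp add: SM_def)
    then obtain L where L: "L \<in> dominant_weights n" "minuscule t n L w"
      and uniq: "\<And>L'. L' \<in> dominant_weights n \<Longrightarrow> minuscule t n L' w \<Longrightarrow> L' = L"
    proof -
      from sm have "\<exists>!L. L \<in> dominant_weights n \<and> minuscule t n L w"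
        unfolding strong_minuscule_def by blast
      then show ?thesis using that by blast
    qed
    have lam: "Lambda_of t n w = L" unfolding Lambda_of_def
      by (rule the_equality) (use L uniq in blast)+
    from L(2) obtain ws where red: "reduced_expr t n ws w"
      and cond: "\<forall>p\<in>{1..length ws}. word_act t n (drop p ws) L (ws!(p-1)) = 1"
      unfolding minuscule_def by blast
    have cover: "idx n \<subseteq> set ws"
    proof
      fix j assume j: "j \<in> idx n"
      show "j \<in> set ws"
      proof (rule ccontr)
        assume nj: "j \<notin> set ws"
        define L' where "L' = (\<lambda>k. L k + fund_weight j k)"
        have cond': "\<forall>p\<in>{1..length ws}. word_act t n (drop p ws) L' (ws!(p-1)) = 1"
        proof
          fix p assume p: "p \<in> {1..length ws}"
          have "j \<notin> set (drop p ws)" using nj set_drop_subset by fastforce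
          then have "word_act t n (drop p ws) L' = (\<lambda>k. word_act t n (drop p ws) L k + fund_weight j k)"
            unfolding L'_def by (rule word_act_add_fund)
          moreover have "ws!(p-1) \<in> set ws" using p by auto
          then have "fund_weight j (ws!(p-1)) = 0" using nj by (auto simp: fund_weight_def)
          ultimately show "word_act t n (drop p ws) L' (ws!(p-1)) = 1" using cond p by simp
        qed
        have "minuscule t n L' w" unfolding minuscule_def using red cond' by blast
        moreover have "L' \<in> dominant_weights n" using L(1) j
          by (auto simp: L'_def dominant_weights_def int_weights_def fund_weight_def add_nonneg_nonneg)
        ultimately have "L' = L" using uniq by blast
        then have "L' j = L j" by simp
        then show False by (simp add: L'_def fund_weight_def)
      qed
    qed
    have fire: "L ((rev ws)!k) - (\<Sum>q<k. cartan t n ((rev ws)!k) ((rev ws)!q)) = 1"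
      if "k < length (rev ws)" for k
      using fr_sum[OF cond_to_fr[OF cond] that] .
    have "\<exists>i\<in>Kset t n. L = fund_weight i"
      apply (rule key[OF assms, of "rev ws"])
      using fire apply blast
      using cover apply simp
      using L(1) apply (simp add: dominant_weights_def)
      using L(1) apply (simp add: dominant_weights_def)
      done
    then show ?thesis using lam by simp
  qed
  have fw: "fund_weight i \<noteq> fund_weight j" if "i \<noteq> j" for i j
  proof
    assume "fund_weight i = fund_weight j"
    then have "fund_weight i i = fund_weight j i" by simp
    then show False using that by (simp add: fund_weight_def)
  qed
  show ?thesis
  proof (intro conjI)
    show "SM t n = (\<Union>i \<in> Kset t n. SM_i t n i)"
      using main by (auto simp: SM_i_def)
    show "\<forall>i \<in> Kset t n. \<forall>j \<in> Kset t n. i \<noteq> j \<longrightarrow> SM_i t n i \<inter> SM_i t n j = {}"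
      using fw by (auto simp: SM_i_def)
    show "\<forall>w \<in> SM t n. \<exists>i \<in> Kset t n. Lambda_of t n w = fund_weight i" using main by blast
  qed
qed

end
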